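(* Let $T$ be a tree on $n$ vertices whose characteristic polynomial is irreducible over $\mathbb{Q}$, and order the vertices according to the bipartition so that $A(T)=\begin{bmatrix} O & M\\ M^{\mathrm T} & O\end{bmatrix}$. Then $\Delta(T)=2^n\Delta^2(M^{\mathrm T}M)$.
   Context: For a monic polynomial $f$ of degree $k$ with roots $\alpha_1,\dots,\alpha_k$, the discriminant is $\Delta(f)=\prod_{1\le i<j\le k}(\alpha_i-\alpha_j)^2$. For a square matrix $B$, $\Delta(B)$ is the discriminant of $\det(xI-B)$; $\Delta(T)$ is the discriminant of the adjacency matrix $A(T)$. *)

theory Defs
  imports "Jordan_Normal_Form.Char_Poly" "HOL-Computational_Algebra.Fundamental_Theorem_Algebra"
begin

definition simple_graph :: "nat \<Rightarrow> (nat \<Rightarrow> nat \<Rightarrow> bool) \<Rightarrow> bool" where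
  "simple_graph n E \<longleftrightarrow> (\<forall>i j. E i j \<longrightarrow> i < n \<and> j < n) \<and> (\<forall>i j. E i j \<longrightarrow> E j i) \<and> (\<forall>i. \<not> E i i)"

definition graph_connected :: "nat \<Rightarrow> (nat \<Rightarrow> nat \<Rightarrow> bool) \<Rightarrow> bool" where
  "graph_connected n E \<longleftrightarrow> (\<forall>i<n. \<forall>j<n. E\<^sup>*\<^sup>* i j)"

definition has_cycle :: "(nat \<Rightarrow> nat \<Rightarrow> bool) \<Rightarrow> bool" where
  "has_cycle E \<longleftrightarrow> (\<exists>vs. length vs \<ge> 3 \<and> distinct vs \<and>
      (\<forall>i. Suc i < length vs \<longrightarrow> E (vs ! i) (vs ! Suc i)) \<and> E (last vs) (hd vs))"

definition is_tree :: "nat \<Rightarrow> (nat \<Rightarrow> nat \<Rightarrow> bool) \<Rightarrow> bool" where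
  "is_tree n E \<longleftrightarrow> n \<ge> 1 \<and> simple_graph n E \<and> graph_connected n E \<and> \<not> has_cycle E"

definition adj_mat :: "nat \<Rightarrow> (nat \<Rightarrow> nat \<Rightarrow> bool) \<Rightarrow> rat mat" where
  "adj_mat n E = mat n n (\<lambda>(i,j). if E i j then 1 else 0)"

(* discriminant of a monic polynomial: product over pairs of roots (with multiplicity)
   of squared differences, roots taken in \<complex> *)
definition poly_disc :: "complex poly \<Rightarrow> complex" where
  "poly_disc f = (let rs = (SOME rs. f = (\<Prod>r\<leftarrow>rs. [:- r, 1:])) in
     (\<Prod>i<length rs. \<Prod>j<length rs. if i < j then (rs ! i - rs ! j)^2 else 1))"

definition mat_disc :: "rat mat \<Rightarrow> complex" where
  "mat_disc B = poly_disc (map_poly of_rat (char_poly B))"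

end

theory Submission
  imports Defs
begin

lemma forest_perm_unique:
  fixes E :: "nat \<Rightarrow> nat \<Rightarrow> bool" and \<pi> \<pi>' :: "nat \<Rightarrow> nat"
  assumes nc: "\<not> has_cycle E" and sym: "\<And>i j. E i j \<Longrightarrow> E j i"
    and p1: "\<pi> permutes {0..<m}" and p2: "\<pi>' permutes {0..<m}"
    and e1: "\<And>i. i < m \<Longrightarrow> E i (m + \<pi> i)" and e2: "\<And>i. i < m \<Longrightarrow> E i (m + \<pi>' i)"
  shows "\<pi> = \<pi>'"
proof (rule ccontr)
  assume "\<pi> \<noteq> \<pi>'"
  then obtain x where x: "\<pi> x \<noteq> \<pi>' x" by auto
  have xm: "x < m"
  proof (rule ccontr)
    assume "\<not> x < m"
    then have "\<pi> x = x" "\<pi>' x = x" using p1 p2 by (auto intro: permutes_not_in)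
    with x show False by simp
  qed
  define rr where "rr = inv_into UNIV \<pi>' \<circ> \<pi>"
  have rrp: "rr permutes {0..<m}" unfolding rr_def by (intro permutes_compose permutes_inv p1 p2)
  have rrx: "rr x \<noteq> x"
  proof
    assume "rr x = x"
    then have "\<pi>' (inv_into UNIV \<pi>' (\<pi> x)) = \<pi>' x" unfolding rr_def by simp
    then show False using x permutes_inverses(1)[OF p2] by simp
  qed
  have rrm: "(rr ^^ i) x < m" for i
  proof (induction i)
    case 0 then show ?case using xm by simp
  next
    case (Suc i) then show ?case using permutes_in_image[OF rrp] by simp
  qed
  have \<pi>m: "y < m \<Longrightarrow> \<pi> y < m" for y using permutes_in_image[OF p1] by simp
  have edge2: "E (m + \<pi> y) (rr y)" if "y < m" for y
  proof -
    have "\<pi>' (rr y) = \<pi> y" unfolding rr_def using permutes_inverses(1)[OF p2] by simp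
    moreover have "rr y < m" using permutes_in_image[OF rrp] that by simp
    ultimately show ?thesis using e2[of "rr y"] sym by metis
  qed
  have "finite {y. \<exists>n. y = (rr ^^ n) x}"
    by (rule finite_subset[of _ "{0..<m}"]) (use rrm in auto)
  then obtain n0 where "n0 > 0" "(rr ^^ n0) x = x"
    using funpow_inj_finite[OF permutes_inj[OF rrp]] by blast
  define k where "k = (LEAST k. 0 < k \<and> (rr ^^ k) x = x)"
  have k: "0 < k" "(rr ^^ k) x = x"
    using LeastI[of "\<lambda>k. 0 < k \<and> (rr ^^ k) x = x", OF conjI[OF \<open>n0 > 0\<close> \<open>(rr ^^ n0) x = x\<close>]]
    unfolding k_def[symmetric] by auto
  have kmin: "\<And>j. 0 < j \<Longrightarrow> j < k \<Longrightarrow> (rr ^^ j) x \<noteq> x"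
    unfolding k_def using not_less_Least by blast
  have k2: "k \<ge> 2"
  proof (rule ccontr)
    assume "\<not> k \<ge> 2"
    with k have "k = 1" by simp
    with k rrx show False by simp
  qed
  have injk: "inj_on (\<lambda>j. (rr ^^ j) x) {0..<k}"
    by (rule inj_on_funpow_least) (use k kmin in auto)
  define f where "f j = (if even j then (rr ^^ (j div 2)) x else m + \<pi> ((rr ^^ (j div 2)) x))" for j
  define vs where "vs = map f [0..<2*k]"
  have "has_cycle E"
    unfolding has_cycle_def
  proof (intro exI conjI allI impI)
    show "length vs \<ge> 3" using k2 unfolding vs_def by simp
    show "distinct vs" unfolding vs_def distinct_map
    proof (intro conjI inj_onI)
      show "distinct [0..<2*k]" by simp
      fix a b assume a: "a \<in> set [0..<2*k]" and b: "b \<in> set [0..<2*k]" and fab: "f a = f b"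
      have ad: "a div 2 < k" "b div 2 < k" using a b by auto
      have "a div 2 = b div 2"
      proof (cases "even a")
        case True
        show ?thesis
        proof (cases "even b")
          case True
          with \<open>even a\<close> fab have "(rr ^^ (a div 2)) x = (rr ^^ (b div 2)) x" unfolding f_def by simp
          then show ?thesis using injk ad by (auto dest: inj_onD)
        next
          case False
          with \<open>even a\<close> fab have "(rr ^^ (a div 2)) x = m + \<pi> ((rr ^^ (b div 2)) x)" unfolding f_def by simp
          with rrm[of "a div 2"] show ?thesis by simp
        qed
      next
        case False
        show ?thesis
        proof (cases "even b")
          case True
          with \<open>odd a\<close> fab have "(rr ^^ (b div 2)) x = m + \<pi> ((rr ^^ (a div 2)) x)" unfolding f_def by simp
          with rrm[of "b div 2"] show ?thesis by simp
        next
          case False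
          with \<open>odd a\<close> fab have "\<pi> ((rr ^^ (a div 2)) x) = \<pi> ((rr ^^ (b div 2)) x)" unfolding f_def by simp
          then have "(rr ^^ (a div 2)) x = (rr ^^ (b div 2)) x" using permutes_inj[OF p1] by (auto dest: injD)
          then show ?thesis using injk ad by (auto dest: inj_onD)
        qed
      qed
      moreover have "even a = even b"
      proof (rule ccontr)
        assume "even a \<noteq> even b"
        then show False using fab rrm[of "a div 2"] rrm[of "b div 2"] unfolding f_def
          by (auto split: if_splits)
      qed
      ultimately show "a = b" by (metis div_mult_mod_eq even_iff_mod_2_eq_zero odd_iff_mod_2_eq_one)
    qed
  next
    fix i assume i: "Suc i < length vs"
    then have i2: "Suc i < 2 * k" unfolding vs_def by simp
    show "E (vs ! i) (vs ! Suc i)"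
    proof (cases "even i")
      case True
      then have "vs ! i = (rr ^^ (i div 2)) x" "vs ! Suc i = m + \<pi> ((rr ^^ (i div 2)) x)"
        using i2 unfolding vs_def f_def by auto
      then show ?thesis using e1 rrm by simp
    next
      case False
      then have "vs ! i = m + \<pi> ((rr ^^ (i div 2)) x)" "vs ! Suc i = rr ((rr ^^ (i div 2)) x)"
        using i2 unfolding vs_def f_def by (auto simp: odd_Suc_div_two)
      then show ?thesis using edge2 rrm by simp
    qed
  next
    have l1: "last vs = f (2*k - 1)" unfolding vs_def using k by (simp add: last_map)
    have d1: "(2*k-1) div 2 = k - 1" using k by (cases k) auto
    have d2: "odd (2*k-1)" using k by (cases k) auto
    have l: "last vs = m + \<pi> ((rr ^^ (k - 1)) x)" unfolding l1 f_def using d1 d2 by simp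
    have h: "hd vs = x" unfolding vs_def f_def using k by (simp add: hd_map)
    have "rr ((rr ^^ (k - 1)) x) = x"
    proof -
      obtain k' where kk: "k = Suc k'" using k by (cases k) auto
      show ?thesis using k(2) unfolding kk by simp
    qed
    then show "E (last vs) (hd vs)" unfolding l h using edge2[OF rrm[of "k-1"]] by simp
  qed
  with nc show False by simp
qed

fun Dl :: "complex list \<Rightarrow> complex" where
  "Dl [] = 1"
| "Dl (a # xs) = (\<Prod>x\<leftarrow>xs. (a - x)^2) * Dl xs"

lemma my_prod_list_map_remove1:
  fixes f :: "'a \<Rightarrow> 'b::comm_monoid_mult"
  shows "x \<in> set xs \<Longrightarrow> prod_list (map f xs) = f x * prod_list (map f (remove1 x xs))"
  by (induction xs) (auto simp: ac_simps)

lemma prod_list_map_mset: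
  fixes f :: "'a \<Rightarrow> 'b::comm_monoid_mult"
  shows "mset xs = mset ys \<Longrightarrow> prod_list (map f xs) = prod_list (map f ys)"
  by (metis mset_map prod_mset_prod_list)

lemma prod_list_map_nth: "(\<Prod>x\<leftarrow>rs. g x) = (\<Prod>j<length rs. g (rs ! j) :: 'b::comm_monoid_mult)"
proof (induction rs)
  case (Cons a rs)
  have "(\<Prod>j<length (a # rs). g ((a # rs) ! j)) = g a * (\<Prod>j<length rs. g (rs ! j))"
    by (subst length_Cons, subst prod.lessThan_Suc_shift) simp
  then show ?case using Cons.IH by simp
qed simp

lemma disc_expr_Dl:
  "(\<Prod>i<length rs. \<Prod>j<length rs. if i < j then (rs ! i - rs ! j)^2 else 1) = Dl rs"
proof (induction rs)
  case Nil then show ?case by simp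
next
  case (Cons a rs)
  have h0: "(\<Prod>j<Suc (length rs). if 0 < j then ((a # rs) ! 0 - (a # rs) ! j)^2 else 1)
      = (\<Prod>x\<leftarrow>rs. (a - x)^2)"
    by (subst prod.lessThan_Suc_shift) (simp add: prod_list_map_nth)
  have hS: "(\<Prod>j<Suc (length rs). if Suc i < j then ((a # rs) ! Suc i - (a # rs) ! j)^2 else 1)
      = (\<Prod>j<length rs. if i < j then (rs ! i - rs ! j)^2 else 1)" for i
    by (subst prod.lessThan_Suc_shift) (simp only: nth_Cons_Suc, simp)
  define F where "F = (\<lambda>i. \<Prod>j<Suc (length rs). if i < j then ((a # rs) ! i - (a # rs) ! j)^2 else 1)"
  have "(\<Prod>i<length (a # rs). \<Prod>j<length (a # rs). if i < j then ((a # rs) ! i - (a # rs) ! j)^2 else 1)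
      = (\<Prod>i<Suc (length rs). F i)" unfolding F_def length_Cons ..
  also have "\<dots> = F 0 * (\<Prod>i<length rs. F (Suc i))" by (rule prod.lessThan_Suc_shift)
  also have "F 0 = (\<Prod>x\<leftarrow>rs. (a - x)^2)" unfolding F_def by (rule h0)
  also have "(\<lambda>i. F (Suc i)) = (\<lambda>i. \<Prod>j<length rs. if i < j then (rs ! i - rs ! j)^2 else 1)"
    unfolding F_def using hS by simp
  finally show ?case using Cons.IH by simp
qed

lemma Dl_remove1: "y \<in> set xs \<Longrightarrow> Dl xs = (\<Prod>x\<leftarrow>remove1 y xs. (y - x)^2) * Dl (remove1 y xs)"
proof (induction xs)
  case Nil then show ?case by simp
next
  case (Cons b xs)
  show ?case
  proof (cases "b = y")
    case True then show ?thesis by simp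
  next
    case False
    then have y: "y \<in> set xs" using Cons.prems by simp
    have "Dl (b # xs) = (\<Prod>x\<leftarrow>xs. (b - x)^2) * Dl xs" by simp
    also have "(\<Prod>x\<leftarrow>xs. (b - x)^2) = (b - y)^2 * (\<Prod>x\<leftarrow>remove1 y xs. (b - x)^2)"
      by (rule my_prod_list_map_remove1[OF y])
    also have "Dl xs = (\<Prod>x\<leftarrow>remove1 y xs. (y - x)^2) * Dl (remove1 y xs)" by (rule Cons.IH[OF y])
    finally have "Dl (b # xs) = (b - y)^2 * (\<Prod>x\<leftarrow>remove1 y xs. (b - x)^2) *
        ((\<Prod>x\<leftarrow>remove1 y xs. (y - x)^2) * Dl (remove1 y xs))" .
    moreover have "(b - y)^2 = (y - b)^2" by (simp add: power2_commute)
    ultimately show ?thesis using False by (simp add: ac_simps)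
  qed
qed

lemma Dl_mset: "mset xs = mset ys \<Longrightarrow> Dl xs = Dl ys"
proof (induction ys arbitrary: xs)
  case Nil then show ?case by simp
next
  case (Cons a ys)
  have a: "a \<in> set xs" using Cons.prems by (metis list.set_intros(1) set_mset_mset)
  have m: "mset (remove1 a xs) = mset ys" using Cons.prems by simp
  have "Dl xs = (\<Prod>x\<leftarrow>remove1 a xs. (a - x)^2) * Dl (remove1 a xs)" by (rule Dl_remove1[OF a])
  also have "\<dots> = (\<Prod>x\<leftarrow>ys. (a - x)^2) * Dl ys"
    using prod_list_map_mset[OF m, of "\<lambda>x. (a - x)^2"] Cons.IH[OF m] by simp
  finally show ?case by simp
qed

lemma lin_factors_mset:
  fixes xs ys :: "complex list"
  shows "(\<Prod>r\<leftarrow>xs. [:- r, 1:]) = (\<Prod>r\<leftarrow>ys. [:- r, 1:]) \<Longrightarrow> mset xs = mset ys"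
proof (induction xs arbitrary: ys)
  case Nil
  have "degree (\<Prod>r\<leftarrow>ys. [:- r, 1:]) = length ys" by (rule degree_linear_factors)
  with Nil show ?case by simp
next
  case (Cons a xs)
  have "poly (\<Prod>r\<leftarrow>ys. [:- r, 1:]) a = 0" using Cons.prems[symmetric] by (simp add: poly_prod_list)
  then have a: "a \<in> set ys" by (auto simp: poly_prod_list prod_list_zero_iff)
  have "[:- a, 1:] * (\<Prod>r\<leftarrow>xs. [:- r, 1:]) = [:- a, 1:] * (\<Prod>r\<leftarrow>remove1 a ys. [:- r, 1:])"
    using Cons.prems my_prod_list_map_remove1[OF a, of "\<lambda>r. [:- r, 1:]"] by simp
  moreover have "[:- a, 1:] \<noteq> (0 :: complex poly)" by simp
  ultimately have "(\<Prod>r\<leftarrow>xs. [:- r, 1:]) = (\<Prod>r\<leftarrow>remove1 a ys. [:- r, 1:])"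
    using mult_left_cancel by blast
  from Cons.IH[OF this] a show ?case by simp
qed

lemma poly_disc_eq:
  assumes "f = (\<Prod>r\<leftarrow>rs. [:- r, 1:])"
  shows "poly_disc f = Dl rs"
proof -
  define rs' where "rs' = (SOME rs. f = (\<Prod>r\<leftarrow>rs. [:- r, 1:]))"
  have "f = (\<Prod>r\<leftarrow>rs'. [:- r, 1:])" unfolding rs'_def by (rule someI[of _ rs]) (rule assms)
  then have "mset rs' = mset rs" using assms lin_factors_mset by metis
  then have "Dl rs' = Dl rs" by (rule Dl_mset)
  then show ?thesis unfolding poly_disc_def Let_def rs'_def[symmetric] disc_expr_Dl by simp
qed

definition dbl :: "complex list \<Rightarrow> complex list" where
  "dbl ss = concat (map (\<lambda>s. [s, - s]) ss)"

lemma prod_dbl: "(\<Prod>x\<leftarrow>dbl ss. g x) = (\<Prod>t\<leftarrow>ss. g t * g (- t))"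
  unfolding dbl_def by (induction ss) (auto simp: ac_simps)

lemma prod_list_map_mult': "(\<Prod>x\<leftarrow>xs. f x) * (\<Prod>x\<leftarrow>xs. g x) = (\<Prod>x\<leftarrow>xs. f x * g x :: 'b :: comm_monoid_mult)"
  by (induction xs) (auto simp: ac_simps)

lemma prod_list_map_power: "(\<Prod>x\<leftarrow>xs. f x) ^ k = (\<Prod>x\<leftarrow>xs. f x ^ k :: 'b :: comm_monoid_mult)"
  by (induction xs) (auto simp: power_mult_distrib)

lemma Dl_dbl: "Dl (dbl ss) = 4 ^ length ss * (\<Prod>s\<leftarrow>ss. s^2) * (Dl (map (\<lambda>s. s^2) ss))^2"
proof (induction ss)
  case Nil then show ?case by (simp add: dbl_def)
next
  case (Cons s ss)
  have d: "dbl (s # ss) = s # (- s) # dbl ss" by (simp add: dbl_def)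
  have p1: "(\<Prod>x\<leftarrow>dbl ss. (s - x)^2) * (\<Prod>x\<leftarrow>dbl ss. (- s - x)^2) = (\<Prod>t\<leftarrow>ss. (s^2 - t^2)^4)"
    unfolding prod_list_map_mult' prod_dbl
    by (rule arg_cong[where f = prod_list], rule map_cong, simp, simp add: power2_eq_square power4_eq_xxxx algebra_simps)
  have "Dl (dbl (s # ss)) = (s - (- s))^2 * ((\<Prod>x\<leftarrow>dbl ss. (s - x)^2) * (\<Prod>x\<leftarrow>dbl ss. (- s - x)^2)) * Dl (dbl ss)"
    unfolding d by (simp add: ac_simps)
  also have "\<dots> = 4 * s^2 * (\<Prod>t\<leftarrow>ss. (s^2 - t^2)^4) * Dl (dbl ss)"
    unfolding p1 by (simp add: power2_eq_square algebra_simps)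
  also have "Dl (dbl ss) = 4 ^ length ss * (\<Prod>s\<leftarrow>ss. s^2) * (Dl (map (\<lambda>s. s^2) ss))^2" by (rule Cons.IH)
  finally have L: "Dl (dbl (s # ss)) = 4 * s^2 * (\<Prod>t\<leftarrow>ss. (s^2 - t^2)^4) *
       (4 ^ length ss * (\<Prod>s\<leftarrow>ss. s^2) * (Dl (map (\<lambda>s. s^2) ss))^2)" .
  have "(Dl (map (\<lambda>s. s^2) (s # ss)))^2 = (\<Prod>t\<leftarrow>ss. (s^2 - t^2)^2)^2 * (Dl (map (\<lambda>s. s^2) ss))^2"
    by (simp add: power_mult_distrib o_def)
  also have "(\<Prod>t\<leftarrow>ss. (s^2 - t^2)^2)^2 = (\<Prod>t\<leftarrow>ss. (s^2 - t^2)^4)"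
    unfolding prod_list_map_power by (simp add: power_mult[symmetric])
  finally show ?case unfolding L by (simp add: ac_simps)
qed

interpretation const_poly_hom: comm_ring_hom "\<lambda>a :: 'a :: comm_ring_1. [:a:]"
  by (unfold_locales) (auto simp: one_pCons)

lemma block_char_poly:
  fixes M :: "rat mat"
  assumes M: "M \<in> carrier_mat m m"
  shows "char_poly (four_block_mat (0\<^sub>m m m) M (transpose_mat M) (0\<^sub>m m m))
       = char_poly (transpose_mat M * M) \<circ>\<^sub>p [:0,0,1:]"
proof -
  define A where "A = four_block_mat (0\<^sub>m m m) M (transpose_mat M) (0\<^sub>m m m)"
  define X :: "rat poly" where "X = [:0,1:]"
  define C where "C = (\<lambda>B :: rat mat. map_mat (\<lambda>a. [:a:]) B)"
  define Mt where "Mt = transpose_mat M"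
  have Mt: "Mt \<in> carrier_mat m m" using M unfolding Mt_def by simp
  have CM: "C M \<in> carrier_mat m m" "C Mt \<in> carrier_mat m m" using M Mt unfolding C_def by auto
  have A: "A \<in> carrier_mat (m+m) (m+m)" unfolding A_def using M by auto
  define P where "P = char_poly_matrix A"
  define Q where "Q = four_block_mat (1\<^sub>m m) (C M) (0\<^sub>m m m) (X \<cdot>\<^sub>m 1\<^sub>m m)"
  define B where "B = Mt * M"
  have B: "B \<in> carrier_mat m m" unfolding B_def using M Mt by simp
  define R4 where "R4 = [:0,0,1:] \<cdot>\<^sub>m 1\<^sub>m m + map_mat (\<lambda>a. [:-a:]) B"
  have PP: "P = four_block_mat (X \<cdot>\<^sub>m 1\<^sub>m m) (- C M) (- C Mt) (X \<cdot>\<^sub>m 1\<^sub>m m)"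
    unfolding P_def char_poly_matrix_def A_def C_def X_def Mt_def
    by (rule eq_matI) (use M in \<open>auto simp: index_mat_four_block\<close>)
  have Q: "Q \<in> carrier_mat (m+m) (m+m)" unfolding Q_def using CM by auto
  have P: "P \<in> carrier_mat (m+m) (m+m)" unfolding P_def using A by simp
  have b2: "(X \<cdot>\<^sub>m 1\<^sub>m m) * C M + (- C M) * (X \<cdot>\<^sub>m 1\<^sub>m m) = 0\<^sub>m m m"
  proof -
    have "(X \<cdot>\<^sub>m 1\<^sub>m m) * C M = X \<cdot>\<^sub>m C M"
      using mult_smult_assoc_mat[of "1\<^sub>m m" m m "C M" m X] CM by simp
    moreover have "(- C M) * (X \<cdot>\<^sub>m 1\<^sub>m m) = X \<cdot>\<^sub>m (- C M)"
      using mult_smult_distrib[of "- C M" m m "1\<^sub>m m" m X] CM by simp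
    ultimately show ?thesis using CM by (auto intro!: eq_matI)
  qed
  have b4: "(- C Mt) * C M + (X \<cdot>\<^sub>m 1\<^sub>m m) * (X \<cdot>\<^sub>m 1\<^sub>m m) = R4"
  proof -
    have "(- C Mt) * C M = - (C Mt * C M)" using CM by simp
    also have "C Mt * C M = C B" unfolding C_def B_def using const_poly_hom.mat_hom_mult[OF Mt M] by simp
    finally have 1: "(- C Mt) * C M = - C B" .
    have 2: "(X \<cdot>\<^sub>m 1\<^sub>m m) * (X \<cdot>\<^sub>m 1\<^sub>m m) = X \<cdot>\<^sub>m (X \<cdot>\<^sub>m 1\<^sub>m m)"
      using mult_smult_assoc_mat[of "1\<^sub>m m" m m "X \<cdot>\<^sub>m 1\<^sub>m m" m X] by simp
    show ?thesis unfolding 1 2 unfolding R4_def C_def X_def using B by (auto intro!: eq_matI)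
  qed
  have PQ: "P * Q = four_block_mat (X \<cdot>\<^sub>m 1\<^sub>m m) (0\<^sub>m m m) (- C Mt) R4"
  proof -
    have c: "X \<cdot>\<^sub>m 1\<^sub>m m \<in> carrier_mat m m" "- C M \<in> carrier_mat m m" "- C Mt \<in> carrier_mat m m"
       "1\<^sub>m m \<in> carrier_mat m m" "0\<^sub>m m m \<in> carrier_mat m m" using CM by auto
    show ?thesis unfolding PP Q_def
      by (subst mult_four_block_mat[OF c(1) c(2) c(3) c(1) c(4) CM(1) c(5) c(1)]) (use CM b2 b4 in auto)
  qed
  have R4: "R4 \<in> carrier_mat m m" unfolding R4_def using B by auto
  have "det (P * Q) = det P * det Q" by (rule det_mult[OF P Q])
  also have "det Q = X ^ m"
    unfolding Q_def by (subst det_four_block_mat_lower_left_zero[of _ m _ m]) (use CM in auto)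
  finally have e1: "det (P * Q) = det P * X ^ m" .
  have "det (P * Q) = det (X \<cdot>\<^sub>m 1\<^sub>m m) * det R4"
    unfolding PQ by (rule det_four_block_mat_upper_right_zero[of _ m _ m]) (use CM R4 in auto)
  also have "det (X \<cdot>\<^sub>m 1\<^sub>m m) = X ^ m" by simp
  finally have "det P * X ^ m = X ^ m * det R4" using e1 by simp
  moreover have "X ^ m \<noteq> 0" unfolding X_def by simp
  ultimately have dP: "det P = det R4" by (metis mult.commute mult_left_cancel)
  have R4eq: "R4 = map_mat (\<lambda>q. q \<circ>\<^sub>p [:0,0,1:]) (char_poly_matrix B)"
    unfolding R4_def char_poly_matrix_def using B by (auto intro!: eq_matI simp: pcompose_pCons)
  have "det R4 = det (char_poly_matrix B) \<circ>\<^sub>p [:0,0,1:]"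
  proof -
    have h: "comm_ring_hom (\<lambda>q :: rat poly. q \<circ>\<^sub>p [:0,0,1:])"
      by unfold_locales (auto simp: pcompose_add pcompose_mult pcompose_1)
    show ?thesis using comm_ring_hom.hom_det[OF h] R4eq by simp
  qed
  then show ?thesis using dP unfolding P_def char_poly_def A_def B_def Mt_def by simp
qed

lemma irr_no_root0:
  fixes f :: "rat poly"
  assumes irr: "irreducible f" and d: "degree f \<ge> 2"
  shows "poly f 0 \<noteq> 0"
proof
  assume "poly f 0 = 0"
  then have "[:0,1:] dvd f" using poly_eq_0_iff_dvd[of f 0] by simp
  then obtain h where f: "f = [:0,1:] * h" by (elim dvdE)
  have f0: "f \<noteq> 0" using d by auto
  then have h0: "h \<noteq> 0" using f by auto
  have "is_unit [:0,1::rat:] \<or> is_unit h" using irreducibleD[OF irr f] .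
  moreover have "\<not> is_unit [:0,1::rat:]" by (simp add: is_unit_iff_degree)
  moreover have "degree h \<ge> 1" using d f h0 by (simp add: degree_mult_eq)
  then have "\<not> is_unit h" using h0 by (simp add: is_unit_iff_degree)
  ultimately show False by simp
qed

lemma det_perm_exists:
  fixes X :: "'a :: idom mat"
  assumes X: "X \<in> carrier_mat n n" and d: "det X \<noteq> 0"
  shows "\<exists>\<sigma>. \<sigma> permutes {0..<n} \<and> (\<forall>i<n. X $$ (i, \<sigma> i) \<noteq> 0)"
proof (rule ccontr)
  assume "\<not> ?thesis"
  then have "\<forall>\<sigma>\<in>{\<sigma>. \<sigma> permutes {0..<n}}. signof \<sigma> * (\<Prod>i = 0..<n. X $$ (i, \<sigma> i)) = 0"
    by auto
  then have "det X = 0" unfolding det_def'[OF X] by (rule sum.neutral)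
  with d show False by simp
qed

lemma det_forest_01:
  fixes M :: "rat mat" and E :: "nat \<Rightarrow> nat \<Rightarrow> bool"
  assumes M: "M \<in> carrier_mat m m"
    and ME: "\<And>i j. i < m \<Longrightarrow> j < m \<Longrightarrow> M $$ (i,j) = (if E i (m + j) then 1 else 0)"
    and nc: "\<not> has_cycle E" and sym: "\<And>i j. E i j \<Longrightarrow> E j i"
  shows "det M = 0 \<or> det M = 1 \<or> det M = -1"
proof -
  define S where "S = {\<pi>. \<pi> permutes {0..<m} \<and> (\<forall>i<m. E i (m + \<pi> i))}"
  have "det M = (\<Sum>\<pi>\<in>S. signof \<pi>)"
    unfolding det_def'[OF M]
  proof (rule sum.mono_neutral_cong_right)
    show "finite {p. p permutes {0..<m}}" by (simp add: finite_permutations)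
    show "S \<subseteq> {p. p permutes {0..<m}}" unfolding S_def by auto
    show "\<forall>\<pi>\<in>{p. p permutes {0..<m}} - S. signof \<pi> * (\<Prod>i = 0..<m. M $$ (i, \<pi> i)) = 0"
    proof
      fix \<pi> assume "\<pi> \<in> {p. p permutes {0..<m}} - S"
      then obtain i where i: "i < m" "\<not> E i (m + \<pi> i)" and p: "\<pi> permutes {0..<m}" unfolding S_def by auto
      have "\<pi> i < m" using permutes_in_image[OF p] i by simp
      then have "M $$ (i, \<pi> i) = 0" using ME i by simp
      then have "(\<Prod>i = 0..<m. M $$ (i, \<pi> i)) = 0" using i by (intro prod_zero) auto
      then show "signof \<pi> * (\<Prod>i = 0..<m. M $$ (i, \<pi> i)) = 0" by simp
    qed
    show "\<And>\<pi>. \<pi> \<in> S \<Longrightarrow> signof \<pi> * (\<Prod>i = 0..<m. M $$ (i, \<pi> i)) = signof \<pi>"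
    proof -
      fix \<pi> assume "\<pi> \<in> S"
      then have p: "\<pi> permutes {0..<m}" and e: "\<forall>i<m. E i (m + \<pi> i)" unfolding S_def by auto
      have "(\<Prod>i = 0..<m. M $$ (i, \<pi> i)) = 1"
      proof (rule prod.neutral, intro ballI)
        fix i assume "i \<in> {0..<m}"
        then have "i < m" "\<pi> i < m" using permutes_in_image[OF p] by auto
        then show "M $$ (i, \<pi> i) = 1" using ME e by simp
      qed
      then show "signof \<pi> * (\<Prod>i = 0..<m. M $$ (i, \<pi> i)) = signof \<pi>" by simp
    qed
  qed
  moreover have uniq: "\<And>a b. a \<in> S \<Longrightarrow> b \<in> S \<Longrightarrow> a = b"
    unfolding S_def using forest_perm_unique[OF nc sym] by blast
  ultimately show ?thesis
  proof (cases "S = {}")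
    case False
    then obtain a where a: "a \<in> S" by auto
    then have "S = {a}" using uniq by blast
    then have "det M = signof a" using \<open>det M = _\<close> by simp
    then show ?thesis by (simp add: sign_def)
  qed simp
qed

lemma prod_list_pcompose: "(\<Prod>x\<leftarrow>xs. f x) \<circ>\<^sub>p q = (\<Prod>x\<leftarrow>xs. f x \<circ>\<^sub>p q :: 'a :: comm_ring_1 poly)"
  by (induction xs) (simp_all add: pcompose_mult pcompose_1)

lemma prod_list_uminus: "(\<Prod>x\<leftarrow>xs. - x) = (-1) ^ length xs * (\<Prod>x\<leftarrow>xs. x :: 'a :: comm_ring_1)"
  by (induction xs) simp_all

theorem corollary4p3:
  fixes n p q :: nat and E :: "nat \<Rightarrow> nat \<Rightarrow> bool" and M :: "rat mat"
  assumes "is_tree n E"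
    and "n \<ge> 2"
    and "irreducible (char_poly (adj_mat n E))"
    and "p + q = n"
    and "M \<in> carrier_mat p q"
    and "adj_mat n E = four_block_mat (0\<^sub>m p p) M (transpose_mat M) (0\<^sub>m q q)"
  shows "mat_disc (adj_mat n E) = 2 ^ n * (mat_disc (transpose_mat M * M))^2"
proof -
  note tree = assms(1) and n2 = assms(2) and irr = assms(3) and pq = assms(4) and Mc = assms(5)
    and blkeq = assms(6)
  define A where "A = adj_mat n E"
  have A: "A \<in> carrier_mat n n" unfolding A_def adj_mat_def by simp
  have sg: "simple_graph n E" and nc: "\<not> has_cycle E" using tree unfolding is_tree_def by auto
  have sym: "\<And>i j. E i j \<Longrightarrow> E j i" using sg unfolding simple_graph_def by blast
  have Aij: "\<And>i j. i < n \<Longrightarrow> j < n \<Longrightarrow> A $$ (i,j) = (if E i j then 1 else 0)"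
    unfolding A_def adj_mat_def by simp
  have blk: "\<And>i j. i < n \<Longrightarrow> j < n \<Longrightarrow> A $$ (i,j) = (if i < p then (if j < p then 0 else M $$ (i, j - p))
      else (if j < p then transpose_mat M $$ (i - p, j) else 0))"
    unfolding A_def blkeq using Mc pq by (auto simp: index_mat_four_block)
  have deg: "degree (char_poly A) = n" using degree_monic_char_poly[OF A] by simp
  have c0: "poly (char_poly A) 0 \<noteq> 0" using irr_no_root0[OF irr[folded A_def]] deg n2 by simp
  have "det (- char_matrix A 0) \<noteq> 0" using c0 char_poly_matrix[OF A] by simp
  moreover have cmA: "- char_matrix A 0 \<in> carrier_mat n n" using A by simp
  ultimately obtain \<sigma> where \<sigma>: "\<sigma> permutes {0..<n}" and \<sigma>nz: "\<forall>i<n. (- char_matrix A 0) $$ (i, \<sigma> i) \<noteq> 0"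
    using det_perm_exists by blast
  have \<sigma>n: "\<And>i. i < n \<Longrightarrow> \<sigma> i < n" using permutes_in_image[OF \<sigma>] by simp
  have Anz: "\<And>i. i < n \<Longrightarrow> A $$ (i, \<sigma> i) \<noteq> 0"
  proof -
    fix i assume i: "i < n"
    have eq: "(- char_matrix A 0) $$ (i, \<sigma> i) = - A $$ (i, \<sigma> i)"
      using A i \<sigma>n[OF i] unfolding char_matrix_def by simp
    have h1: "(- char_matrix A 0) $$ (i, \<sigma> i) \<noteq> 0" using \<sigma>nz i by blast
    then show "A $$ (i, \<sigma> i) \<noteq> 0" unfolding eq by simp
  qed
  have inj\<sigma>: "inj_on \<sigma> X" for X using permutes_inj[OF \<sigma>] by (rule inj_on_subset) simp
  have "card {0..<p} \<le> card {p..<n}"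
  proof (rule card_inj_on_le[OF inj\<sigma>])
    show "\<sigma> ` {0..<p} \<subseteq> {p..<n}"
    proof
      fix y assume "y \<in> \<sigma> ` {0..<p}"
      then obtain i where i: "i < p" "y = \<sigma> i" by auto
      have "i < n" using i pq by simp
      then show "y \<in> {p..<n}" using Anz[of i] blk[of i "\<sigma> i"] \<sigma>n[of i] i by (auto split: if_splits)
    qed
  qed simp
  moreover have "card {p..<n} \<le> card {0..<p}"
  proof (rule card_inj_on_le[OF inj\<sigma>])
    show "\<sigma> ` {p..<n} \<subseteq> {0..<p}"
    proof
      fix y assume "y \<in> \<sigma> ` {p..<n}"
      then obtain i where i: "p \<le> i" "i < n" "y = \<sigma> i" by auto
      then show "y \<in> {0..<p}" using Anz[of i] blk[of i "\<sigma> i"] \<sigma>n[of i] i by (auto split: if_splits)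
    qed
  qed simp
  ultimately have qp: "q = p" using pq by simp
  define m where "m = p"
  have nm: "n = m + m" using pq qp m_def by simp
  have M: "M \<in> carrier_mat m m" using Mc qp m_def by simp
  have Mt: "transpose_mat M \<in> carrier_mat m m" using M by simp
  have ME: "\<And>i j. i < m \<Longrightarrow> j < m \<Longrightarrow> M $$ (i,j) = (if E i (m + j) then 1 else 0)"
  proof -
    fix i j assume ij: "i < m" "j < m"
    have "A $$ (i, m + j) = M $$ (i, j)" using blk[of i "m + j"] ij nm m_def by simp
    then show "M $$ (i,j) = (if E i (m + j) then 1 else 0)" using Aij[of i "m + j"] ij nm by simp
  qed
  have det01: "det M = 0 \<or> det M = 1 \<or> det M = -1" by (rule det_forest_01[OF M ME nc sym])
  define B where "B = transpose_mat M * M"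
  have B: "B \<in> carrier_mat m m" unfolding B_def using M by simp
  have Ablk: "A = four_block_mat (0\<^sub>m m m) M (transpose_mat M) (0\<^sub>m m m)"
    unfolding A_def blkeq m_def qp ..
  have cpA: "char_poly A = char_poly B \<circ>\<^sub>p [:0,0,1:]"
    unfolding Ablk B_def by (rule block_char_poly[OF M])
  have dB: "poly (char_poly B) 0 = (-1)^m * det B"
  proof -
    have "- char_matrix B 0 = (-1) \<cdot>\<^sub>m B" using B unfolding char_matrix_def by (auto intro!: eq_matI)
    then show ?thesis using char_poly_matrix[OF B, of 0] det_smult[of "-1" B] B by simp
  qed
  have detB: "det B = det M * det M"
    unfolding B_def using det_mult[OF Mt M] det_transpose[OF M] by simp
  have "poly (char_poly A) 0 = poly (char_poly B) 0" unfolding cpA by (simp add: poly_pcompose)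
  then have "det B \<noteq> 0" using c0 dB by auto
  then have "det M \<noteq> 0" using detB by auto
  then have detB1: "det B = 1" using det01 detB by auto
  define gC where "gC = map_poly (of_rat :: rat \<Rightarrow> complex) (char_poly B)"
  have "gC = char_poly (map_mat of_rat B)" unfolding gC_def by (rule of_rat_hom.char_poly_hom[OF B, symmetric])
  moreover have "map_mat (of_rat :: rat \<Rightarrow> complex) B \<in> carrier_mat m m" using B by simp
  ultimately obtain \<mu>s where g\<mu>: "gC = (\<Prod>a\<leftarrow>\<mu>s. [:- a, 1:])" and len: "length \<mu>s = m"
    using char_poly_factorized by metis
  have discB: "mat_disc B = Dl \<mu>s" unfolding mat_disc_def gC_def[symmetric] by (rule poly_disc_eq[OF g\<mu>])
  have "poly gC 0 = of_rat (poly (char_poly B) 0)" unfolding gC_def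
    by (rule of_rat_hom.poly_map_poly_0)
  also have "\<dots> = (-1)^m" using dB detB1 by (simp add: of_rat_power)
  finally have "poly gC 0 = (-1)^m" .
  moreover have "poly gC 0 = (-1)^m * (\<Prod>a\<leftarrow>\<mu>s. a)"
    unfolding g\<mu> by (simp add: poly_prod_list o_def prod_list_uminus len)
  ultimately have prod1: "(\<Prod>a\<leftarrow>\<mu>s. a) = 1" by simp
  define ss where "ss = map csqrt \<mu>s"
  have sq: "\<And>a. csqrt a * csqrt a = a" using power2_csqrt by (simp add: power2_eq_square)
  have fac: "[:- a, 1:] \<circ>\<^sub>p [:0,0,1:] = [:- csqrt a, 1:] * [:- (- csqrt a), 1:]" for a
    by (simp add: pcompose_pCons sq)
  have "map_poly (of_rat :: rat \<Rightarrow> complex) (char_poly A) = gC \<circ>\<^sub>p [:0,0,1:]"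
    unfolding cpA gC_def by (simp add: of_rat_hom.map_poly_pcompose)
  also have "\<dots> = (\<Prod>a\<leftarrow>\<mu>s. [:- a, 1:] \<circ>\<^sub>p [:0,0,1:])" unfolding g\<mu> by (rule prod_list_pcompose)
  also have "\<dots> = (\<Prod>t\<leftarrow>ss. [:- t, 1:] * [:- (- t), 1:])" unfolding ss_def fac by (simp add: o_def)
  also have "\<dots> = (\<Prod>r\<leftarrow>dbl ss. [:- r, 1:])" by (rule prod_dbl[symmetric])
  finally have discA: "mat_disc A = Dl (dbl ss)" unfolding mat_disc_def by (rule poly_disc_eq)
  have "map (\<lambda>s. s^2) ss = \<mu>s" unfolding ss_def by (simp add: o_def)
  moreover have "(\<Prod>s\<leftarrow>ss. s^2) = (\<Prod>a\<leftarrow>\<mu>s. a)" unfolding ss_def by (simp add: o_def)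
  moreover have "length ss = m" unfolding ss_def using len by simp
  ultimately have "mat_disc A = 4 ^ m * (Dl \<mu>s)^2" unfolding discA Dl_dbl using prod1 by simp
  moreover have "(2::complex) ^ n = 4 ^ m" unfolding nm by (simp add: mult_2[symmetric] power_mult)
  ultimately show ?thesis unfolding A_def[symmetric] B_def[symmetric] discB by simp
qed

end
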